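(* Let $p\in\mathbb N$, let $H_1,\ldots,H_p$ be separable Hilbert spaces, let $I_i:H_{p+2-i}\to H_{p+1-i}$ ($i=2,\ldots,p$) be linear operators, and let $B_1,\ldots,B_p$ be linear (possibly unbounded) operators on $H_1$ with $Dom(B):=Dom(B_1)\cap\cdots\cap Dom(B_p)$ non-empty. Let $L$ be a zero-mean square-integrable $H_p$-valued Lévy process, $\delta>0$, $t_i=i\delta$, and assume the increments of $L$ lie in the domain of $I_p\cdots I_2$; set $\epsilon_i:=\delta^{-1}I_p\cdots I_2(L(t_{i+1})-L(t_i))$, $i=0,1,2,\ldots$. Let $\{x_i\}_{i\ge0}\subset H_1$ be defined by $$Q_p\!\left(\frac{\Delta_\delta}{\delta}\right)x_i=\epsilon_i,\qquad i=0,1,2,\ldots,$$ with given initial values $x_0,\ldots,x_{p-1}$, where $Q_p(\lambda)=\lambda^p-B_1\lambda^{p-1}-\cdots-B_{p-1}\lambda-B_p$, i.e. $\delta^{-p}\Delta_\delta^p x_i-\sum_{q=1}^p\delta^{-(p-q)}B_q\Delta_\delta^{p-q}x_i=\epsilon_i$. Assume that $B_1y_1+\cdots+B_py_p\in Dom(B)$ for all $y_1,\ldots,y_p\in Dom(B)$, that $\epsilon_i\in Dom(B)$ for all $i$, and that $x_0,\ldots,x_{p-1}\in Dom(B)$. Then $\{x_i\}_{i\ge0}$ is an AR$(p)$ process in $H_1$ with dynamics $$x_{i+p}=\sum_{q=1}^p\widetilde B_qx_{i+(p-q)}+\delta^p\epsilon_i,$$ where $$\widetilde B_q=(-1)^{q+1}\binom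 pq\mathrm{Id}+\sum_{k=1}^q\delta^kB_k(-1)^{q-k}\binom{p-k}{q-k},\qquad q=1,\ldots,p,$$ and $\mathrm{Id}$ is the identity on $H_1$.
   Context: $\Delta_\delta^n$ is the $n$th order forward difference acting on the sequence via $x_i=x(t_i)$: $\Delta_\delta^nx_i=\sum_{k=0}^n\binom nk(-1)^kx_{i+n-k}$, with $\Delta_\delta^0$ the identity. In the paper the operators $B_q$ arise from operators $A_q:H_{p+1-q}\to H_p$ of an operator matrix via $I_p\cdots I_2A_q=B_qI_pI_{p-1}\cdots I_{q+1}$ for $q=1,\ldots,p-1$ and $B_p:=I_p\cdots I_2A_p$, but only the operators $B_1,\ldots,B_p$ on $H_1$ enter the statement. *)

theory Defs
  imports "HOL-Analysis.Analysis"
begin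

text \<open>A (possibly unbounded) linear operator T with domain D: D is a linear
  subspace and T is additive and homogeneous on D (values of T outside D are
  irrelevant).\<close>
definition linear_on_domain :: "'a::real_vector set \<Rightarrow> ('a \<Rightarrow> 'a) \<Rightarrow> bool" where
  "linear_on_domain D T \<longleftrightarrow> subspace D \<and>
     (\<forall>x\<in>D. \<forall>y\<in>D. T (x + y) = T x + T y) \<and>
     (\<forall>c. \<forall>x\<in>D. T (c *\<^sub>R x) = c *\<^sub>R T x)"

definition fdiff :: "nat \<Rightarrow> (nat \<Rightarrow> 'a::real_vector) \<Rightarrow> nat \<Rightarrow> 'a" where
  "fdiff n x i = (\<Sum>k=0..n. (real (n choose k) * (-1) ^ k) *\<^sub>R x (i + n - k))"

definition AR_coeff :: "nat \<Rightarrow> real \<Rightarrow> (nat \<Rightarrow> 'a \<Rightarrow> 'a::real_vector) \<Rightarrow> nat \<Rightarrow> 'a \<Rightarrow> 'a" where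
  "AR_coeff p \<delta> B q y =
     ((-1) ^ (q + 1) * real (p choose q)) *\<^sub>R y
     + (\<Sum>k=1..q. (\<delta> ^ k * (-1) ^ (q - k) * real ((p - k) choose (q - k))) *\<^sub>R B k y)"

end

theory Submission
  imports Defs
begin


lemma lod_zero: "linear_on_domain D T \<Longrightarrow> T 0 = 0"
  unfolding linear_on_domain_def
  by (metis scale_zero_left subspace_0)

lemma lod_sum:
  assumes "linear_on_domain D T" "finite S" "\<And>s. s \<in> S \<Longrightarrow> f s \<in> D"
  shows "T (\<Sum>s\<in>S. c s *\<^sub>R f s) = (\<Sum>s\<in>S. c s *\<^sub>R T (f s))"
  using assms(2,3)
proof (induction S rule: finite_induct)
  case empty
  then show ?case using lod_zero[OF assms(1)] by simp
next
  case (insert a S)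
  have sub: "subspace D" using assms(1) unfolding linear_on_domain_def by blast
  have m: "(\<Sum>s\<in>S. c s *\<^sub>R f s) \<in> D"
    using insert by (intro subspace_sum[OF sub]) (auto intro: subspace_scale[OF sub])
  have fa: "f a \<in> D" using insert by auto
  have "T (\<Sum>s\<in>insert a S. c s *\<^sub>R f s) = T (c a *\<^sub>R f a + (\<Sum>s\<in>S. c s *\<^sub>R f s))"
    using insert by simp
  also have "\<dots> = T (c a *\<^sub>R f a) + T (\<Sum>s\<in>S. c s *\<^sub>R f s)"
    using assms(1) m fa subspace_scale[OF sub fa] unfolding linear_on_domain_def by blast
  also have "\<dots> = c a *\<^sub>R T (f a) + (\<Sum>s\<in>S. c s *\<^sub>R T (f s))"
    using assms(1) fa insert unfolding linear_on_domain_def by auto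
  finally show ?case using insert by simp
qed

theorem proposition6:
  fixes p :: nat
    and \<delta> :: real
    and B :: "nat \<Rightarrow> 'a::{real_inner, complete_space} \<Rightarrow> 'a"
    and Dom :: "nat \<Rightarrow> 'a set"
    and \<epsilon> :: "nat \<Rightarrow> 'a"
    and x :: "nat \<Rightarrow> 'a"
  assumes separable: "\<exists>S::'a set. countable S \<and> closure S = UNIV"
    and B_lin: "\<And>q. q \<in> {1..p} \<Longrightarrow> linear_on_domain (Dom q) (B q)"
    and DomB_ne: "(\<Inter>q\<in>{1..p}. Dom q) \<noteq> {}"
    and delta_pos: "\<delta> > 0"
    and recursion: "\<And>i. (1 / \<delta> ^ p) *\<^sub>R fdiff p x i
        - (\<Sum>q=1..p. (1 / \<delta> ^ (p - q)) *\<^sub>R B q (fdiff (p - q) x i)) = \<epsilon> i"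
    and closed: "\<And>y. (\<And>q. q \<in> {1..p} \<Longrightarrow> y q \<in> (\<Inter>q\<in>{1..p}. Dom q)) \<Longrightarrow>
        (\<Sum>q=1..p. B q (y q)) \<in> (\<Inter>q\<in>{1..p}. Dom q)"
    and eps_dom: "\<And>i. \<epsilon> i \<in> (\<Inter>q\<in>{1..p}. Dom q)"
    and init_dom: "\<And>i. i < p \<Longrightarrow> x i \<in> (\<Inter>q\<in>{1..p}. Dom q)"
  shows "\<forall>i. x (i + p) = (\<Sum>q=1..p. AR_coeff p \<delta> B q (x (i + (p - q)))) + \<delta> ^ p *\<^sub>R \<epsilon> i"
proof -
  define D where "D = (\<Inter>q\<in>{1..p}. Dom q)"
  have subD: "subspace D"
    unfolding D_def
    using B_lin unfolding linear_on_domain_def subspace_def by auto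
  have dpos: "\<delta> ^ n > 0" for n using delta_pos by simp
  have solved: "x (i + p) = (\<Sum>q=1..p. ((-1) ^ (q + 1) * real (p choose q)) *\<^sub>R x (i + (p - q)))
      + (\<Sum>q=1..p. \<delta> ^ q *\<^sub>R B q (fdiff (p - q) x i)) + \<delta> ^ p *\<^sub>R \<epsilon> i" for i
  proof -
    have r: "\<delta> ^ p *\<^sub>R ((1 / \<delta> ^ p) *\<^sub>R fdiff p x i
        - (\<Sum>q=1..p. (1 / \<delta> ^ (p - q)) *\<^sub>R B q (fdiff (p - q) x i))) = \<delta> ^ p *\<^sub>R \<epsilon> i"
      using recursion by simp
    have c: "\<delta> ^ p * (1 / \<delta> ^ (p - q)) = \<delta> ^ q" if "q \<in> {1..p}" for q
    proof -
      have "\<delta> ^ p = \<delta> ^ q * \<delta> ^ (p - q)" using that by (simp flip: power_add)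
      then show ?thesis using dpos[of "p - q"] that by simp
    qed
    have r2: "fdiff p x i - (\<Sum>q=1..p. \<delta> ^ q *\<^sub>R B q (fdiff (p - q) x i)) = \<delta> ^ p *\<^sub>R \<epsilon> i"
      using r dpos[of p] c delta_pos by (simp add: scaleR_diff_right scaleR_sum_right)
    have fd: "fdiff p x i = x (i + p) + (\<Sum>q=1..p. (real (p choose q) * (-1) ^ q) *\<^sub>R x (i + (p - q)))"
    proof -
      have "fdiff p x i = (\<Sum>k\<in>insert 0 {1..p}. (real (p choose k) * (-1) ^ k) *\<^sub>R x (i + p - k))"
        unfolding fdiff_def by (rule sum.cong) auto
      also have "\<dots> = x (i + p) + (\<Sum>q=1..p. (real (p choose q) * (-1) ^ q) *\<^sub>R x (i + p - q))"
        by simp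
      finally show ?thesis by simp
    qed
    have neg: "- (\<Sum>q=1..p. (real (p choose q) * (-1) ^ q) *\<^sub>R x (i + (p - q)))
       = (\<Sum>q=1..p. ((-1) ^ (q + 1) * real (p choose q)) *\<^sub>R x (i + (p - q)))"
      by (simp add: sum_negf[symmetric] mult.commute)
    have g: "a = (- s) + d + c" if "a + s - d = c" for a s c d :: 'a
      using that by (simp add: algebra_simps)
    show ?thesis
      unfolding neg[symmetric] by (rule g) (use r2 fd in \<open>simp only:\<close>)
  qed
  have fdD: "fdiff n x i \<in> D" if "\<And>j. j \<le> i + n \<Longrightarrow> x j \<in> D" for n i
    unfolding fdiff_def using that
    by (intro subspace_sum[OF subD] subspace_scale[OF subD]) auto
  have allD: "x j \<in> D" for j
  proof (induction j rule: less_induct)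
    case (less j)
    show ?case
    proof (cases "j < p")
      case True then show ?thesis using init_dom unfolding D_def by blast
    next
      case False
      then obtain i where j: "j = i + p" by (metis add.commute le_Suc_ex not_less)
      have fq: "fdiff (p - q) x i \<in> D" if "q \<in> {1..p}" for q
        using that j by (intro fdD less.IH) auto
      have eq: "\<delta> ^ q *\<^sub>R B q (fdiff (p - q) x i) = B q (\<delta> ^ q *\<^sub>R fdiff (p - q) x i)"
        if "q \<in> {1..p}" for q
        using B_lin[OF that] fq[OF that] that unfolding linear_on_domain_def D_def by auto
      have s1: "(\<Sum>q=1..p. \<delta> ^ q *\<^sub>R B q (fdiff (p - q) x i)) \<in> D"
        using closed[of "\<lambda>q. \<delta> ^ q *\<^sub>R fdiff (p - q) x i"] fq subspace_scale[OF subD]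
        by (simp add: eq D_def)
      have s0: "(\<Sum>q=1..p. ((-1) ^ (q + 1) * real (p choose q)) *\<^sub>R x (i + (p - q))) \<in> D"
        using j by (intro subspace_sum[OF subD] subspace_scale[OF subD] less.IH) auto
      have s2: "\<delta> ^ p *\<^sub>R \<epsilon> i \<in> D" using eps_dom[of i] subspace_scale[OF subD] unfolding D_def by blast
      show ?thesis unfolding j solved using s0 s1 s2 by (intro subspace_add[OF subD])
    qed
  qed
  show ?thesis
  proof
    fix i
    define F where "F q m = (\<delta> ^ q * (-1) ^ (m - q) * real ((p - q) choose (m - q))) *\<^sub>R B q (x (i + (p - m)))" for q m
    have inner: "\<delta> ^ q *\<^sub>R B q (fdiff (p - q) x i) = (\<Sum>m=q..p. F q m)" if q: "q \<in> {1..p}" for q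
    proof -
      have "B q (fdiff (p - q) x i) = (\<Sum>k=0..p-q. (real ((p - q) choose k) * (-1) ^ k) *\<^sub>R B q (x (i + (p - q) - k)))"
        unfolding fdiff_def
        by (rule lod_sum[OF B_lin[OF q]]) (use allD q in \<open>auto simp: D_def\<close>)
      hence "\<delta> ^ q *\<^sub>R B q (fdiff (p - q) x i) = (\<Sum>k=0..p-q. F q (k + q))"
        unfolding F_def scaleR_sum_right using q
        by (auto intro!: sum.cong simp: algebra_simps scaleR_sum_right)
      also have "\<dots> = (\<Sum>m=0+q..p-q+q. F q m)"
        by (rule sum.shift_bounds_cl_nat_ivl[symmetric])
      finally show ?thesis using q by simp
    qed
    have swap: "(\<Sum>q=1..p. \<Sum>m=q..p. F q m) = (\<Sum>m=1..p. \<Sum>q=1..m. F q m)"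
    proof -
      have "(\<Sum>q=1..p. \<Sum>m=q..p. F q m) = (\<Sum>q=1..p. \<Sum>m=1..p. if q \<le> m then F q m else 0)"
      proof (rule sum.cong[OF refl])
        fix q assume q: "q \<in> {1..p}"
        have e: "{m \<in> {1..p}. q \<le> m} = {q..p}" using q by auto
        show "(\<Sum>m=q..p. F q m) = (\<Sum>m=1..p. if q \<le> m then F q m else 0)"
          using sum.inter_filter[OF finite_atLeastAtMost[of 1 p], where g="F q" and P="\<lambda>m. q \<le> m"] unfolding e .
      qed
      also have "\<dots> = (\<Sum>m=1..p. \<Sum>q=1..p. if q \<le> m then F q m else 0)"
        by (rule sum.swap)
      also have "\<dots> = (\<Sum>m=1..p. \<Sum>q=1..m. F q m)"
      proof (rule sum.cong[OF refl])
        fix m assume m: "m \<in> {1..p}"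
        have e: "{q \<in> {1..p}. q \<le> m} = {1..m}" using m by auto
        show "(\<Sum>q=1..p. if q \<le> m then F q m else 0) = (\<Sum>q=1..m. F q m)"
          using sum.inter_filter[OF finite_atLeastAtMost[of 1 p], where g="\<lambda>q. F q m" and P="\<lambda>q. q \<le> m"] unfolding e by (rule sym)
      qed
      finally show ?thesis .
    qed
    have "(\<Sum>q=1..p. \<delta> ^ q *\<^sub>R B q (fdiff (p - q) x i)) = (\<Sum>q=1..p. \<Sum>m=q..p. F q m)"
      by (rule sum.cong) (auto simp: inner)
    also have "\<dots> = (\<Sum>m=1..p. \<Sum>q=1..m. F q m)" by (rule swap)
    finally have B2: "(\<Sum>q=1..p. \<delta> ^ q *\<^sub>R B q (fdiff (p - q) x i)) = (\<Sum>m=1..p. \<Sum>q=1..m. F q m)" .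
    have AR: "(\<Sum>q=1..p. AR_coeff p \<delta> B q (x (i + (p - q)))) =
       (\<Sum>q=1..p. ((-1) ^ (q + 1) * real (p choose q)) *\<^sub>R x (i + (p - q))) + (\<Sum>m=1..p. \<Sum>q=1..m. F q m)"
      unfolding AR_coeff_def F_def sum.distrib by (rule refl)
    show "x (i + p) = (\<Sum>q=1..p. AR_coeff p \<delta> B q (x (i + (p - q)))) + \<delta> ^ p *\<^sub>R \<epsilon> i"
      unfolding AR B2[symmetric] by (rule solved)
  qed
qed

end
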